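(* Let $g\ge1$, $n\ge3$, $k\in\{1,\dots,n\}$, and let $y\in A_g^n$ be a point at which $f_k$ attains its minimum on $A_g^n$. Let $i_0$ be the minimal index with $y_{i_0}=y_n$. Then (i) $i_0\le k$; (ii) $y_i>y_{i+1}$ for all $1\le i\le i_0-1$; (iii) $y_1\cdots y_i=g(y_{i+1}+\dots+y_n)$ for all $1\le i\le i_0-1$.
   Context: For $g,n\ge1$, $A_g^n\subseteq\mathbb{R}^n$ is the (compact) set of $(x_1,\dots,x_n)$ with $x_1\ge\dots\ge x_n\ge0$, $x_1+\dots+x_n=1/g$, and $x_1\cdots x_k\le g(x_{k+1}+\dots+x_n)$ for all $k=1,\dots,n-1$. For $1\le k\le n$, $f_k\colon A_g^n\to\mathbb{R}$, $f_k(x)=x_1\cdots x_k$. *)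

theory Defs
  imports Complex_Main
begin

text \<open>Points of R^n are represented as functions x :: nat => real, with coordinates
  x 1, ..., x n (values at other indices are irrelevant).\<close>

definition A_set :: "nat \<Rightarrow> nat \<Rightarrow> (nat \<Rightarrow> real) set" where
  "A_set g n = {x. (\<forall>i\<in>{1..<n}. x i \<ge> x (Suc i)) \<and> x n \<ge> 0
      \<and> (\<Sum>i=1..n. x i) = 1 / real g
      \<and> (\<forall>k\<in>{1..<n}. (\<Prod>i=1..k. x i) \<le> real g * (\<Sum>i=Suc k..n. x i))}"

definition f_fun :: "nat \<Rightarrow> (nat \<Rightarrow> real) \<Rightarrow> real" where
  "f_fun k x = (\<Prod>i=1..k. x i)"

end

theory Submission
  imports Defs
begin



lemma mono_le:
  fixes x :: "nat \<Rightarrow> real"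
  assumes st: "\<And>i. 1 \<le> i \<Longrightarrow> i < n \<Longrightarrow> x (Suc i) \<le> x i"
    and i1: "1 \<le> i" and ij: "i \<le> j" and jn: "j \<le> n"
  shows "x j \<le> x i"
  using ij jn
proof (induction j rule: dec_induct)
  case base then show ?case by simp
next
  case (step m)
  then have "x m \<le> x i" by simp
  moreover have "x (Suc m) \<le> x m" using step.prems step.hyps i1 by (intro st) auto
  ultimately show ?case by simp
qed

lemma tail_sum_split:
  fixes x :: "nat \<Rightarrow> real"
  assumes "l \<le> n"
  shows "(\<Sum>i=Suc l..n. x i) = (\<Sum>i=1..n. x i) - (\<Sum>i=1..l. x i)"
proof -
  have "{1..n} = {1..l} \<union> {Suc l..n}" using assms by auto
  moreover have "{1..l} \<inter> {Suc l..n} = {}" by auto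
  ultimately have "(\<Sum>i=1..n. x i) = (\<Sum>i=1..l. x i) + (\<Sum>i=Suc l..n. x i)"
    by (simp add: sum.union_disjoint)
  then show ?thesis by simp
qed

lemma tail:
  fixes x :: "nat \<Rightarrow> real" and G :: real
  assumes mono: "\<And>i j. 1 \<le> i \<Longrightarrow> i \<le> j \<Longrightarrow> j \<le> n \<Longrightarrow> x j \<le> x i"
    and nn: "0 \<le> x n" and small: "real n * x n \<le> 1"
    and const: "\<And>j. p \<le> j \<Longrightarrow> j \<le> n \<Longrightarrow> x j = x n"
    and p: "2 \<le> p" "p \<le> n" and G: "0 \<le> G"
    and C: "(\<Prod>i=1..p-1. x i) \<le> G * (\<Sum>i=p..n. x i)"
    and l: "p \<le> l" "l < n"
  shows "(\<Prod>i=1..l. x i) \<le> G * (\<Sum>i=Suc l..n. x i)"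
proof -
  define c where "c = x n"
  define Q where "Q = (\<Prod>i=1..p-1. x i)"
  define t where "t = Suc l - p"
  have t1: "1 \<le> t" using l unfolding t_def by simp
  have eq: "{1..l} = {1..p-1} \<union> {p..l}" using p l by auto
  have dj: "{1..p-1} \<inter> {p..l} = {}" using p by auto
  have "(\<Prod>i=1..l. x i) = (\<Prod>i\<in>{1..p-1} \<union> {p..l}. x i)" by (simp only: eq)
  also have "\<dots> = Q * (\<Prod>i=p..l. x i)" unfolding Q_def
    by (rule prod.union_disjoint) (use dj in auto)
  also have "(\<Prod>i=p..l. x i) = (\<Prod>i=p..l. c)"
  proof (intro prod.cong refl)
    fix i assume "i \<in> {p..l}"
    then show "x i = c" unfolding c_def using l by (intro const) auto
  qed
  also have "\<dots> = c ^ t" unfolding t_def by simp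
  finally have P: "(\<Prod>i=1..l. x i) = Q * c ^ t" .
  have "(\<Sum>i=p..n. x i) = (\<Sum>i=p..n. c)"
  proof (intro sum.cong refl)
    fix i assume "i \<in> {p..n}"
    then show "x i = c" unfolding c_def by (intro const) auto
  qed
  then have S1: "(\<Sum>i=p..n. x i) = real (Suc n - p) * c" by simp
  have "(\<Sum>i=Suc l..n. x i) = (\<Sum>i=Suc l..n. c)"
  proof (intro sum.cong refl)
    fix i assume "i \<in> {Suc l..n}"
    then show "x i = c" unfolding c_def using l by (intro const) auto
  qed
  then have S2: "(\<Sum>i=Suc l..n. x i) = real (n - l) * c" by simp
  have c0: "0 \<le> c" using nn c_def by simp
  have n1: "1 \<le> real n" using p by simp
  have c1: "c \<le> 1"
  proof -
    have "1 * c \<le> real n * c" using n1 c0 by (rule mult_right_mono)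
    then show ?thesis using small unfolding c_def by simp
  qed
  have Q0: "0 \<le> Q" unfolding Q_def
  proof (intro prod_nonneg)
    fix i assume "i \<in> {1..p-1}"
    then have "x n \<le> x i" using p by (intro mono) auto
    then show "0 \<le> x i" using nn by simp
  qed
  have ct: "c ^ t \<le> c"
  proof -
    have "c ^ t = c * c ^ (t - 1)" using t1 by (metis Suc_diff_le diff_Suc_1 power_Suc)
    also have "\<dots> \<le> c * 1" using c0 c1 by (intro mult_left_mono power_le_one) auto
    finally show ?thesis by simp
  qed
  have QC: "Q \<le> G * (real (Suc n - p) * c)" using C S1 Q_def by simp
  have r1: "real (Suc n - p) \<le> real n" using p by simp
  have r2: "1 \<le> real (n - l)" using l by simp
  have "Q * c ^ t \<le> (G * (real (Suc n - p) * c)) * c ^ t"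
    using QC c0 by (intro mult_right_mono) auto
  also have "\<dots> \<le> (G * (real (Suc n - p) * c)) * c"
    using ct G c0 by (intro mult_left_mono) auto
  also have "\<dots> = (G * c) * (real (Suc n - p) * c)" by (simp add: algebra_simps)
  also have "\<dots> \<le> (G * c) * real (n - l)"
  proof (intro mult_left_mono)
    have "real (Suc n - p) * c \<le> real n * c" using r1 c0 by (intro mult_right_mono) auto
    also have "\<dots> \<le> 1" using small c_def by simp
    finally show "real (Suc n - p) * c \<le> real (n - l)" using r2 by simp
    show "0 \<le> G * c" using G c0 by simp
  qed
  also have "\<dots> = G * (real (n - l) * c)" by simp
  finally show ?thesis using P S2 by simp
qed

lemma ev_mono:
  fixes y v :: "nat \<Rightarrow> real"
  assumes st: "\<And>t. 1 \<le> t \<Longrightarrow> t < n \<Longrightarrow> y (Suc t) \<le> y t"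
    and sv: "\<And>t. 1 \<le> t \<Longrightarrow> t < n \<Longrightarrow> v t < v (Suc t) \<Longrightarrow> y (Suc t) < y t"
  shows "\<forall>\<^sub>F e in at_right 0. \<forall>t\<in>{1..<n}. y (Suc t) + e * v (Suc t) \<le> y t + e * v t"
proof (rule eventually_ball_finite)
  show "finite {1..<n}" by simp
  show "\<forall>t\<in>{1..<n}. \<forall>\<^sub>F e in at_right 0. y (Suc t) + e * v (Suc t) \<le> y t + e * v t"
  proof
    fix t assume t: "t \<in> {1..<n}"
    show "\<forall>\<^sub>F e in at_right 0. y (Suc t) + e * v (Suc t) \<le> y t + e * v t"
    proof (cases "v t < v (Suc t)")
      case True
      then have yy: "y (Suc t) < y t" using sv t by auto
      have lim: "((\<lambda>e. (y t + e * v t) - (y (Suc t) + e * v (Suc t))) \<longlongrightarrow>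
          (y t + 0 * v t) - (y (Suc t) + 0 * v (Suc t))) (at_right 0)"
        by (intro tendsto_intros)
      have "\<forall>\<^sub>F e in at_right 0. 0 < (y t + e * v t) - (y (Suc t) + e * v (Suc t))"
        by (rule order_tendstoD(1)[OF lim]) (use yy in simp)
      then show ?thesis by eventually_elim simp
    next
      case False
      have "\<forall>\<^sub>F e in at_right (0::real). 0 < e" by (rule eventually_at_right_less)
      then show ?thesis
      proof eventually_elim
        case (elim e)
        have "e * v (Suc t) \<le> e * v t" using False elim by (intro mult_left_mono) auto
        then show ?case using st t by fastforce
      qed
    qed
  qed
qed

lemma ev_pos:
  fixes y v :: "nat \<Rightarrow> real"
  assumes "finite A" "\<And>j. j \<in> A \<Longrightarrow> 0 < y j"
  shows "\<forall>\<^sub>F e in at_right 0. \<forall>j\<in>A. 0 < y j + e * v j"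
proof (rule eventually_ball_finite)
  show "finite A" by fact
  show "\<forall>j\<in>A. \<forall>\<^sub>F e in at_right 0. 0 < y j + e * v j"
  proof
    fix j assume j: "j \<in> A"
    have lim: "((\<lambda>e. y j + e * v j) \<longlongrightarrow> y j + 0 * v j) (at_right 0)"
      by (intro tendsto_intros)
    show "\<forall>\<^sub>F e in at_right 0. 0 < y j + e * v j"
      by (rule order_tendstoD(1)[OF lim]) (use assms j in simp)
  qed
qed

lemma ev_slack:
  fixes y v :: "nat \<Rightarrow> real"
  assumes "(\<Prod>i=1..l. y i) < G * (\<Sum>i=Suc l..n. y i)"
  shows "\<forall>\<^sub>F e in at_right 0. (\<Prod>i=1..l. y i + e * v i) < G * (\<Sum>i=Suc l..n. y i + e * v i)"
proof -
  have lim: "((\<lambda>e. G * (\<Sum>i=Suc l..n. y i + e * v i) - (\<Prod>i=1..l. y i + e * v i)) \<longlongrightarrow>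
     G * (\<Sum>i=Suc l..n. y i + 0 * v i) - (\<Prod>i=1..l. y i + 0 * v i)) (at_right 0)"
    by (intro tendsto_intros)
  have "\<forall>\<^sub>F e in at_right 0. 0 < G * (\<Sum>i=Suc l..n. y i + e * v i) - (\<Prod>i=1..l. y i + e * v i)"
    by (rule order_tendstoD(1)[OF lim]) (use assms in simp)
  then show ?thesis by eventually_elim simp
qed

lemma prod_strict:
  fixes f h :: "nat \<Rightarrow> real"
  assumes "finite A" "a \<in> A" "\<And>t. t \<in> A \<Longrightarrow> 0 \<le> f t" "\<And>t. t \<in> A \<Longrightarrow> f t \<le> h t"
    "f a < h a" "\<And>t. t \<in> A \<Longrightarrow> 0 < h t"
  shows "prod f A < prod h A"
proof -
  have "prod f A = f a * prod f (A - {a})" using assms by (simp add: prod.remove)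
  also have "\<dots> \<le> f a * prod h (A - {a})"
    using assms by (intro mult_left_mono prod_mono) auto
  also have "\<dots> < h a * prod h (A - {a})"
    using assms by (intro mult_strict_right_mono prod_pos) auto
  also have "\<dots> = prod h A" using assms by (simp add: prod.remove)
  finally show ?thesis .
qed

lemma pair_prod:
  fixes y :: "nat \<Rightarrow> real"
  assumes A: "finite A" "h \<in> A" "j \<in> A" "h \<noteq> j" and yy: "y j \<le> y h" and e: "0 < e"
    and pos: "\<And>t. t \<in> A \<Longrightarrow> 0 < y t"
  shows "(\<Prod>t\<in>A. y t + e * ((if t = h then 1 else 0) - (if t = j then 1 else 0))) < (\<Prod>t\<in>A. y t)"
proof -
  define v :: "nat \<Rightarrow> real" where "v t = (if t = h then 1 else 0) - (if t = j then 1 else 0)" for t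
  have split: "prod f A = f h * f j * prod f (A - {h} - {j})" for f :: "nat \<Rightarrow> real"
  proof -
    have "prod f A = f h * prod f (A - {h})" using A by (simp add: prod.remove)
    also have "prod f (A - {h}) = f j * prod f (A - {h} - {j})" using A by (simp add: prod.remove)
    finally show ?thesis by simp
  qed
  have R: "(\<Prod>t\<in>A - {h} - {j}. y t + e * v t) = (\<Prod>t\<in>A - {h} - {j}. y t)"
    by (intro prod.cong) (auto simp: v_def)
  have R0: "0 < (\<Prod>t\<in>A - {h} - {j}. y t)" using pos by (intro prod_pos) auto
  have hj: "(y h + e * v h) * (y j + e * v j) < y h * y j"
  proof -
    have "(y h + e * v h) * (y j + e * v j) = (y h + e) * (y j - e)" using A by (simp add: v_def)
    also have "\<dots> = y h * y j - e * (y h - y j) - e * e" by (simp add: algebra_simps)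
    also have "\<dots> < y h * y j"
    proof -
      have "0 \<le> e * (y h - y j)" using e yy by simp
      moreover have "0 < e * e" using e by simp
      ultimately show ?thesis by simp
    qed
    finally show ?thesis .
  qed
  have "(\<Prod>t\<in>A. y t + e * v t) = (y h + e * v h) * (y j + e * v j) * (\<Prod>t\<in>A - {h} - {j}. y t)"
    using split R by simp
  also have "\<dots> < y h * y j * (\<Prod>t\<in>A - {h} - {j}. y t)"
    using hj R0 by (intro mult_strict_right_mono) auto
  also have "\<dots> = (\<Prod>t\<in>A. y t)" using split by simp
  finally show ?thesis unfolding v_def .
qed




locale mn =
  fixes g n k i0 :: nat and y :: "nat \<Rightarrow> real"
  assumes g1: "1 \<le> g" and n3: "3 \<le> n" and k1: "1 \<le> k" and kn: "k \<le> n"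
    and yA: "y \<in> A_set g n"
    and ymin: "\<And>x. x \<in> A_set g n \<Longrightarrow> f_fun k y \<le> f_fun k x"
    and i0_def: "i0 = (LEAST i. 1 \<le> i \<and> y i = y n)"
begin

lemma ystep: "1 \<le> i \<Longrightarrow> i < n \<Longrightarrow> y (Suc i) \<le> y i"
  using yA unfolding A_set_def by auto

lemma ymono: "1 \<le> i \<Longrightarrow> i \<le> j \<Longrightarrow> j \<le> n \<Longrightarrow> y j \<le> y i"
  by (rule mono_le[of n y]) (auto intro: ystep)

lemma ysum: "(\<Sum>i=1..n. y i) = 1 / real g"
  using yA unfolding A_set_def by auto

lemma ycon: "1 \<le> l \<Longrightarrow> l < n \<Longrightarrow> (\<Prod>i=1..l. y i) \<le> real g * (\<Sum>i=Suc l..n. y i)"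
  using yA unfolding A_set_def by auto

lemma yn0: "0 \<le> y n"
  using yA unfolding A_set_def by auto

lemma ynn: "1 \<le> j \<Longrightarrow> j \<le> n \<Longrightarrow> 0 \<le> y j"
  using ymono[of j n] yn0 by simp

lemma ypos: assumes "1 \<le> j" "j \<le> n" shows "0 < y j"
proof -
  have "0 < y n"
  proof (rule ccontr)
    assume "\<not> 0 < y n"
    hence yn: "y n = 0" using yn0 by simp
    define j0 where "j0 = (LEAST j. 1 \<le> j \<and> y j = 0)"
    have P: "1 \<le> j0 \<and> y j0 = 0" unfolding j0_def by (rule LeastI[of _ n]) (use yn n3 in auto)
    have j0n: "j0 \<le> n" unfolding j0_def by (rule Least_le) (use yn n3 in auto)
    have below: "0 < y t" if "1 \<le> t" "t < j0" for t
    proof -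
      have "\<not> (1 \<le> t \<and> y t = 0)" using not_less_Least[of t "\<lambda>j. 1 \<le> j \<and> y j = 0"] that
        unfolding j0_def by blast
      then have "y t \<noteq> 0" using that by simp
      moreover have "0 \<le> y t" using that j0n by (intro ynn) auto
      ultimately show ?thesis by simp
    qed
    have after: "y t = 0" if "j0 \<le> t" "t \<le> n" for t
      using ymono[of j0 t] ynn[of t] P that by force
    show False
    proof (cases "j0 = 1")
      case True
      then have "\<And>t. t \<in> {1..n} \<Longrightarrow> y t = 0" using after by auto
      then have "(\<Sum>i=1..n. y i) = 0" by simp
      with ysum g1 show False by simp
    next
      case False
      then have j2: "2 \<le> j0" using P by simp
      have "(\<Prod>i=1..j0-1. y i) > 0" using below j2 by (intro prod_pos) auto
      moreover have "(\<Sum>i=Suc (j0-1)..n. y i) = 0" using after j2 by (intro sum.neutral) auto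
      moreover have "(\<Prod>i=1..j0-1. y i) \<le> real g * (\<Sum>i=Suc (j0-1)..n. y i)"
        using ycon[of "j0-1"] j2 j0n by simp
      ultimately show False by simp
    qed
  qed
  then show ?thesis using ymono[of j n] assms by simp
qed

lemma ylt1: assumes "1 \<le> j" "j \<le> n" shows "y j < 1"
proof -
  have "(\<Sum>i=1..n. y i) = y j + (\<Sum>i\<in>{1..n}-{j}. y i)" using assms by (simp add: sum.remove)
  moreover have "0 < (\<Sum>i\<in>{1..n}-{j}. y i)"
  proof (rule sum_pos)
    show "{1..n} - {j} \<noteq> {}"
    proof (cases "j = 1")
      case True then have "2 \<in> {1..n} - {j}" using n3 by auto
      then show ?thesis by blast
    next
      case False then have "1 \<in> {1..n} - {j}" using n3 by auto
      then show ?thesis by blast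
    qed
  qed (auto intro: ypos)
  moreover have "1 / real g \<le> 1" using g1 by simp
  ultimately show ?thesis using ysum by simp
qed

lemma i0_1: "1 \<le> i0" and i0_y: "y i0 = y n" and i0_n: "i0 \<le> n"
proof -
  have "1 \<le> i0 \<and> y i0 = y n" unfolding i0_def by (rule LeastI[of _ n]) (use n3 in auto)
  then show "1 \<le> i0" "y i0 = y n" by auto
  show "i0 \<le> n" unfolding i0_def by (rule Least_le) (use n3 in auto)
qed

lemma i0_less: assumes "1 \<le> t" "t < i0" shows "y n < y t"
proof -
  have "\<not> (1 \<le> t \<and> y t = y n)" using not_less_Least[of t "\<lambda>j. 1 \<le> j \<and> y j = y n"] assms
    unfolding i0_def by blast
  then have "y t \<noteq> y n" using assms by simp
  moreover have "y n \<le> y t" using assms i0_n by (intro ymono) auto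
  ultimately show ?thesis by simp
qed

lemma i0_block: assumes "i0 \<le> t" "t \<le> n" shows "y t = y n"
proof -
  have "y t \<le> y i0" using assms i0_1 by (intro ymono) auto
  moreover have "y n \<le> y t" using assms i0_1 by (intro ymono) auto
  ultimately show ?thesis using i0_y by simp
qed

lemma no_tight_eq:
  assumes l: "1 \<le> l" "Suc l < n" and eq: "y l = y (Suc l)"
  shows "(\<Prod>i=1..l. y i) < real g * (\<Sum>i=Suc l..n. y i)"
proof -
  have le: "(\<Prod>i=1..l. y i) \<le> real g * (\<Sum>i=Suc l..n. y i)" using ycon l by simp
  have "(\<Prod>i=1..l. y i) \<noteq> real g * (\<Sum>i=Suc l..n. y i)"
  proof
    assume tight: "(\<Prod>i=1..l. y i) = real g * (\<Sum>i=Suc l..n. y i)"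
    define r where "r = y l"
    define T where "T = (\<Sum>i=Suc l..n. y i)"
    have r0: "0 < r" unfolding r_def using l by (intro ypos) auto
    have r1: "r < 1" unfolding r_def using l by (intro ylt1) auto
    have gpos: "0 < real g" using g1 by simp
    show False
    proof (cases "l = 1")
      case True
      have "(\<Sum>i=2..n. y i) = y 2 + (\<Sum>i=3..n. y i)" using n3
        by (subst sum.atLeast_Suc_atMost) (auto simp: numeral_eq_Suc)
      moreover have "y n \<le> (\<Sum>i=3..n. y i)" using n3
        by (intro member_le_sum) (auto intro: ynn)
      moreover have "0 < y n" using n3 by (intro ypos) auto
      ultimately have y2: "y 2 < (\<Sum>i=2..n. y i)" by linarith
      have "1 * (\<Sum>i=2..n. y i) \<le> real g * (\<Sum>i=2..n. y i)"
        using g1 y2 ypos[of 2] n3 by (intro mult_right_mono) auto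
      then have "y 2 < real g * (\<Sum>i=2..n. y i)" using y2 by linarith
      moreover have "y 1 = real g * (\<Sum>i=2..n. y i)" using tight True by (simp add: numeral_eq_Suc)
      moreover have "y 1 = y 2" using eq True by (simp add: numeral_eq_Suc)
      ultimately show False by simp
    next
      case False
      then have l2: "2 \<le> l" using l by simp
      have Pl: "(\<Prod>i=1..l. y i) = (\<Prod>i=1..l-1. y i) * r"
      proof -
        have "(\<Prod>i=1..Suc (l-1). y i) = y (Suc (l-1)) * (\<Prod>i=1..l-1. y i)"
          by (rule prod.nat_ivl_Suc') simp
        then show ?thesis using l2 unfolding r_def by (simp add: mult.commute)
      qed
      have Pl1: "(\<Prod>i=1..Suc l. y i) = (\<Prod>i=1..l. y i) * r"
      proof -
        have "(\<Prod>i=1..Suc l. y i) = y (Suc l) * (\<Prod>i=1..l. y i)"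
          by (rule prod.nat_ivl_Suc') simp
        then show ?thesis using eq unfolding r_def by (simp add: mult.commute)
      qed
      have Tm: "(\<Sum>i=Suc (l-1)..n. y i) = r + T"
      proof -
        have "(\<Sum>i=l..n. y i) = y l + (\<Sum>i=Suc l..n. y i)" using l
          by (intro sum.atLeast_Suc_atMost) simp
        then show ?thesis using l2 unfolding r_def T_def by simp
      qed
      have Tp: "T = r + (\<Sum>i=Suc (Suc l)..n. y i)"
      proof -
        have "(\<Sum>i=Suc l..n. y i) = y (Suc l) + (\<Sum>i=Suc (Suc l)..n. y i)" using l
          by (intro sum.atLeast_Suc_atMost) simp
        then show ?thesis using eq unfolding r_def T_def by simp
      qed
      have Cm: "(\<Prod>i=1..l-1. y i) \<le> real g * (r + T)"
        using ycon[of "l-1"] l l2 Tm by simp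
      have Cp: "(\<Prod>i=1..Suc l. y i) \<le> real g * (T - r)"
        using ycon[of "Suc l"] l Tp by simp
      have tg: "(\<Prod>i=1..l. y i) = real g * T" using tight T_def by simp
      have A1: "r * T \<le> T - r"
      proof -
        have "real g * (r * T) = (\<Prod>i=1..Suc l. y i)" by (simp only: Pl1 tg mult_ac)
        then have "real g * (r * T) \<le> real g * (T - r)" using Cp by simp
        then show ?thesis using gpos by simp
      qed
      have A2: "T \<le> r * (r + T)"
      proof -
        have "real g * T = (\<Prod>i=1..l-1. y i) * r" using Pl tg by simp
        also have "\<dots> \<le> real g * (r + T) * r" using Cm r0 by (intro mult_right_mono) auto
        finally have "real g * T \<le> real g * (r * (r + T))" by (simp add: algebra_simps)
        then show ?thesis using gpos by simp
      qed
      have "r \<le> r * r" using A1 A2 by (simp add: algebra_simps)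
      then have "1 \<le> r" using r0 by simp
      then show False using r1 by simp
    qed
  qed
  then show ?thesis using le by simp
qed

end



context mn
begin

lemma inA:
  assumes st: "\<forall>t\<in>{1..<n}. x (Suc t) \<le> x t" and pos: "\<forall>t\<in>{1..n}. 0 < x t"
    and sm: "(\<Sum>i=1..n. x i) = (\<Sum>i=1..n. y i)"
    and con: "\<And>l. 1 \<le> l \<Longrightarrow> l < n \<Longrightarrow> (\<Prod>i=1..l. x i) \<le> real g * (\<Sum>i=Suc l..n. x i)"
  shows "x \<in> A_set g n"
proof -
  have "0 < x n" using pos n3 by auto
  then show ?thesis unfolding A_set_def using st sm con ysum by auto
qed

lemma contra: "x \<in> A_set g n \<Longrightarrow> f_fun k x < f_fun k y \<Longrightarrow> False"
  using ymin by fastforce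

lemma sum_pert: "(\<Sum>i\<in>S. y i + e * v i) = (\<Sum>i\<in>S. y i) + e * (\<Sum>i\<in>S. v i)"
  by (simp add: sum.distrib sum_distrib_left)

lemma tailx:
  assumes st: "\<forall>t\<in>{1..<n}. x (Suc t) \<le> x t" and pos: "\<forall>t\<in>{1..n}. 0 < x t"
    and sm: "(\<Sum>i=1..n. x i) = (\<Sum>i=1..n. y i)"
    and blk: "\<And>t. i0 \<le> t \<Longrightarrow> t \<le> n \<Longrightarrow> x t = x n" and i02: "2 \<le> i0"
    and C: "(\<Prod>i=1..i0-1. x i) \<le> real g * (\<Sum>i=i0..n. x i)"
    and l: "i0 \<le> l" "l < n"
  shows "(\<Prod>i=1..l. x i) \<le> real g * (\<Sum>i=Suc l..n. x i)"
proof -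
  have mono: "x j \<le> x i" if "1 \<le> i" "i \<le> j" "j \<le> n" for i j
    by (rule mono_le[of n x]) (use st that in auto)
  have "0 < x n" using pos n3 by auto
  then have nn: "0 \<le> x n" by simp
  have small: "real n * x n \<le> 1"
  proof -
    have "(\<Sum>i=1..n. x n) \<le> (\<Sum>i=1..n. x i)" by (intro sum_mono mono) auto
    then have "real n * x n \<le> 1 / real g" using sm ysum by simp
    also have "\<dots> \<le> 1" using g1 by simp
    finally show ?thesis .
  qed
  show ?thesis
    by (rule tail[where p = i0 and n = n, OF mono nn small blk i02 i0_n _ C l]) auto
qed

lemma pair_move:
  assumes hj: "1 \<le> h" "h < j" "j \<le> k"
    and lft: "2 \<le> h \<Longrightarrow> y h < y (h - 1)"
    and rgt: "j < n \<Longrightarrow> y (Suc j) < y j"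
    and slack: "\<And>l. h \<le> l \<Longrightarrow> l < j \<Longrightarrow> (\<Prod>i=1..l. y i) < real g * (\<Sum>i=Suc l..n. y i)"
  shows False
proof -
  define v :: "nat \<Rightarrow> real" where "v t = (if t = h then 1 else 0) - (if t = j then 1 else 0)" for t
  have jn: "j \<le> n" using hj kn by simp
  have E0: "\<forall>\<^sub>F e in at_right (0::real). 0 < e" by (rule eventually_at_right_less)
  have E1: "\<forall>\<^sub>F e in at_right 0. \<forall>t\<in>{1..<n}. y (Suc t) + e * v (Suc t) \<le> y t + e * v t"
  proof (rule ev_mono)
    show "\<And>t. 1 \<le> t \<Longrightarrow> t < n \<Longrightarrow> y (Suc t) \<le> y t" by (rule ystep)
  next
    fix t assume t: "1 \<le> t" "t < n" and lt: "v t < v (Suc t)"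
    show "y (Suc t) < y t"
    proof (cases "Suc t = h")
      case True
      then show ?thesis using lft t by auto
    next
      case False
      have "t = j"
      proof (rule ccontr)
        assume "t \<noteq> j"
        then show False using lt False hj unfolding v_def by (auto split: if_splits)
      qed
      then show ?thesis using rgt t by simp
    qed
  qed
  have E2: "\<forall>\<^sub>F e in at_right 0. \<forall>t\<in>{1..n}. 0 < y t + e * v t"
    by (rule ev_pos) (auto intro: ypos)
  have E3: "\<forall>\<^sub>F e in at_right 0. \<forall>l\<in>{h..<j}.
      (\<Prod>i=1..l. y i + e * v i) < real g * (\<Sum>i=Suc l..n. y i + e * v i)"
  proof (rule eventually_ball_finite)
    show "finite {h..<j}" by simp
    show "\<forall>l\<in>{h..<j}. \<forall>\<^sub>F e in at_right 0.
      (\<Prod>i=1..l. y i + e * v i) < real g * (\<Sum>i=Suc l..n. y i + e * v i)"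
    proof
      fix l assume "l \<in> {h..<j}"
      then have "(\<Prod>i=1..l. y i) < real g * (\<Sum>i=Suc l..n. y i)" by (intro slack) auto
      then show "\<forall>\<^sub>F e in at_right 0.
        (\<Prod>i=1..l. y i + e * v i) < real g * (\<Sum>i=Suc l..n. y i + e * v i)"
        by (rule ev_slack)
    qed
  qed
  have "\<forall>\<^sub>F e in at_right (0::real). False"
    using E0 E1 E2 E3
  proof eventually_elim
    case (elim e)
    define x where "x = (\<lambda>t. y t + e * v t)"
    have vs: "(\<Sum>t\<in>S. v t) = (if h \<in> S then 1 else 0) - (if j \<in> S then 1 else 0)" if "finite S" for S
      using that unfolding v_def by (simp add: sum_subtractf)
    have v0: "(\<Sum>i=1..n. v i) = 0" using vs[of "{1..n}"] hj jn by simp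
    have xs: "(\<Sum>i=1..n. x i) = (\<Sum>i=1..n. y i)" unfolding x_def using v0 by (simp add: sum_pert)
    have Tsame: "(\<Sum>i=Suc l..n. x i) = (\<Sum>i=Suc l..n. y i)" if "l < h \<or> j \<le> l" for l
    proof -
      have "(\<Sum>i=Suc l..n. v i) = 0" using vs[of "{Suc l..n}"] that hj jn by auto
      then show ?thesis unfolding x_def by (simp add: sum_pert)
    qed
    have con: "(\<Prod>i=1..l. x i) \<le> real g * (\<Sum>i=Suc l..n. x i)" if l: "1 \<le> l" "l < n" for l
    proof (cases "l < h")
      case True
      have "(\<Prod>i=1..l. x i) = (\<Prod>i=1..l. y i)" unfolding x_def v_def using True hj
        by (intro prod.cong) auto
      then show ?thesis using Tsame[of l] True l ycon by simp
    next
      case False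
      show ?thesis
      proof (cases "l < j")
        case True
        then show ?thesis using elim(4) False l unfolding x_def by (auto intro: less_imp_le)
      next
        case False2: False
        have "(\<Prod>i=1..l. x i) < (\<Prod>i=1..l. y i)" unfolding x_def v_def
          by (rule pair_prod) (use hj False2 l elim(1) in \<open>auto intro: ymono ypos\<close>)
        then show ?thesis using Tsame[of l] False2 l ycon[of l] by simp
      qed
    qed
    have "x \<in> A_set g n" by (rule inA) (use elim(2) elim(3) xs con in \<open>auto simp: x_def\<close>)
    moreover have "f_fun k x < f_fun k y" unfolding f_fun_def x_def v_def
      by (rule pair_prod) (use hj kn elim(1) in \<open>auto intro: ymono ypos\<close>)
    ultimately show False by (rule contra)
  qed
  then show False using trivial_limit_at_right_real by (simp add: eventually_False)
qed

end



context mn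
begin

lemma part_i: assumes ki: "k < i0" shows False
proof -
  have i02: "2 \<le> i0" using ki k1 by simp
  define m where "m = Suc n - i0"
  have m1: "1 \<le> m" using i0_n unfolding m_def by simp
  define v :: "nat \<Rightarrow> real" where "v t = (if t < i0 then -1 else real (i0 - 1) / real m)" for t
  have E0: "\<forall>\<^sub>F e in at_right (0::real). 0 < e" by (rule eventually_at_right_less)
  have E1: "\<forall>\<^sub>F e in at_right 0. \<forall>t\<in>{1..<n}. y (Suc t) + e * v (Suc t) \<le> y t + e * v t"
  proof (rule ev_mono)
    show "\<And>t. 1 \<le> t \<Longrightarrow> t < n \<Longrightarrow> y (Suc t) \<le> y t" by (rule ystep)
  next
    fix t assume t: "1 \<le> t" "t < n" and lt: "v t < v (Suc t)"
    have "t < i0"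
    proof (rule ccontr)
      assume "\<not> t < i0" then show False using lt unfolding v_def by simp
    qed
    moreover have "\<not> Suc t < i0"
    proof
      assume "Suc t < i0" then show False using lt unfolding v_def by simp
    qed
    ultimately have "Suc t = i0" by simp
    then show "y (Suc t) < y t" using i0_y i0_less[of t] t \<open>t < i0\<close> by simp
  qed
  have E2: "\<forall>\<^sub>F e in at_right 0. \<forall>t\<in>{1..n}. 0 < y t + e * v t"
    by (rule ev_pos) (auto intro: ypos)
  have v0: "(\<Sum>i=1..n. v i) = 0"
  proof -
    have eq: "{1..n} = {1..<i0} \<union> {i0..n}" using i0_n i02 by auto
    have dj: "{1..<i0} \<inter> {i0..n} = {}" by auto
    have "(\<Sum>i=1..n. v i) = (\<Sum>i\<in>{1..<i0} \<union> {i0..n}. v i)" by (simp only: eq)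
    also have "\<dots> = (\<Sum>i\<in>{1..<i0}. v i) + (\<Sum>i\<in>{i0..n}. v i)"
      by (rule sum.union_disjoint) (use dj in auto)
    also have "(\<Sum>i\<in>{1..<i0}. v i) = (\<Sum>i\<in>{1..<i0}. -1)" unfolding v_def by (intro sum.cong) auto
    also have "(\<Sum>i\<in>{i0..n}. v i) = (\<Sum>i\<in>{i0..n}. real (i0 - 1) / real m)"
      unfolding v_def by (intro sum.cong) auto
    also have "(\<Sum>i\<in>{1..<i0}. (-1::real)) + (\<Sum>i\<in>{i0..n}. real (i0 - 1) / real m)
        = - real (i0 - 1) + real m * (real (i0 - 1) / real m)"
      unfolding m_def by simp
    also have "\<dots> = 0" using m1 by simp
    finally show ?thesis .
  qed
  have "\<forall>\<^sub>F e in at_right (0::real). False"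
    using E0 E1 E2
  proof eventually_elim
    case (elim e)
    define x where "x = (\<lambda>t. y t + e * v t)"
    have xs: "(\<Sum>i=1..n. x i) = (\<Sum>i=1..n. y i)" unfolding x_def using v0 by (simp add: sum_pert)
    have xlow: "x t = y t - e" if "t < i0" for t using that unfolding x_def v_def by simp
    have xpos: "0 < x t" if "1 \<le> t" "t \<le> n" for t using elim(3) that unfolding x_def by auto
    have con1: "(\<Prod>i=1..l. x i) \<le> real g * (\<Sum>i=Suc l..n. x i)" if l: "1 \<le> l" "l < i0" for l
    proof -
      have ln: "l \<le> n" using l i0_n by simp
      have "(\<Prod>i=1..l. x i) \<le> (\<Prod>i=1..l. y i)"
      proof (intro prod_mono conjI)
        fix i assume i: "i \<in> {1..l}"
        then show "0 \<le> x i" using xpos[of i] ln by auto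
        show "x i \<le> y i" using xlow[of i] i l elim(1) by auto
      qed
      also have "\<dots> \<le> real g * (\<Sum>i=Suc l..n. y i)" using ycon[of l] l i0_n by simp
      also have "\<dots> \<le> real g * (\<Sum>i=Suc l..n. x i)"
      proof (intro mult_left_mono)
        have "(\<Sum>i=1..l. x i) \<le> (\<Sum>i=1..l. y i)"
          by (intro sum_mono) (use xlow l elim(1) in auto)
        then show "(\<Sum>i=Suc l..n. y i) \<le> (\<Sum>i=Suc l..n. x i)"
          using tail_sum_split[OF ln, of x] tail_sum_split[OF ln, of y] xs by simp
      qed simp
      finally show ?thesis .
    qed
    have x_in: "x \<in> A_set g n"
    proof (rule inA)
      show "\<forall>t\<in>{1..<n}. x (Suc t) \<le> x t" using elim(2) unfolding x_def by auto
      show "\<forall>t\<in>{1..n}. 0 < x t" using xpos by auto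
      show "(\<Sum>i=1..n. x i) = (\<Sum>i=1..n. y i)" by (rule xs)
      fix l assume l: "1 \<le> l" "l < n"
      show "(\<Prod>i=1..l. x i) \<le> real g * (\<Sum>i=Suc l..n. x i)"
      proof (cases "l < i0")
        case True then show ?thesis using con1 l by simp
      next
        case False
        show ?thesis
        proof (rule tailx)
          show "\<forall>t\<in>{1..<n}. x (Suc t) \<le> x t" using elim(2) unfolding x_def by auto
          show "\<forall>t\<in>{1..n}. 0 < x t" using xpos by auto
          show "(\<Sum>i=1..n. x i) = (\<Sum>i=1..n. y i)" by (rule xs)
          show "x t = x n" if "i0 \<le> t" "t \<le> n" for t
            using that i0_block[of t] i0_n unfolding x_def v_def by simp
          show "2 \<le> i0" by (rule i02)
          show "(\<Prod>i=1..i0-1. x i) \<le> real g * (\<Sum>i=i0..n. x i)"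
            using con1[of "i0 - 1"] i02 by simp
          show "i0 \<le> l" "l < n" using False l by auto
        qed
      qed
    qed
    have "f_fun k x < f_fun k y" unfolding f_fun_def
    proof (rule prod_strict[where a = k])
      show "finite {1..k}" "k \<in> {1..k}" using k1 by auto
      show "0 \<le> x t" if "t \<in> {1..k}" for t using that xpos[of t] kn by auto
      show "x t \<le> y t" if "t \<in> {1..k}" for t using that xlow[of t] ki elim(1) by auto
      show "x k < y k" using xlow[of k] ki elim(1) by auto
      show "0 < y t" if "t \<in> {1..k}" for t using that kn by (intro ypos) auto
    qed
    then show False using x_in contra by blast
  qed
  then show False using trivial_limit_at_right_real by (simp add: eventually_False)
qed

lemma part_ii:
  assumes ik: "i0 \<le> k" and ex: "\<exists>t. 1 \<le> t \<and> Suc t < i0 \<and> y t = y (Suc t)"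
  shows False
proof -
  define Pd where "Pd t \<longleftrightarrow> 1 \<le> t \<and> Suc t < i0 \<and> y t = y (Suc t)" for t
  define i where "i = (LEAST t. Pd t)"
  have Pi: "Pd i" unfolding i_def by (rule LeastI_ex) (use ex in \<open>simp add: Pd_def\<close>)
  have imin: "\<not> Pd t" if "t < i" for t using not_less_Least[of t Pd] that unfolding i_def by blast
  from Pi have i1: "1 \<le> i" and ii0: "Suc i < i0" and yi: "y i = y (Suc i)" unfolding Pd_def by auto
  define B where "B = {j \<in> {i..<i0}. y j = y i}"
  have fB: "finite B" unfolding B_def by simp
  have SiB: "Suc i \<in> B" unfolding B_def using ii0 yi by simp
  define b where "b = Max B"
  have bB: "b \<in> B" unfolding b_def using fB SiB by (intro Max_in) auto
  have bge: "Suc i \<le> b" unfolding b_def using fB SiB by (rule Max_ge)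
  have bi0: "b < i0" and yb: "y b = y i" using bB unfolding B_def by auto
  have run: "y l = y i" if "i \<le> l" "l \<le> b" for l
  proof -
    have "y l \<le> y i" using that i1 bi0 i0_n by (intro ymono) auto
    moreover have "y b \<le> y l" using that i1 bi0 i0_n by (intro ymono) auto
    ultimately show ?thesis using yb by simp
  qed
  show False
  proof (rule pair_move[of i b])
    show "1 \<le> i" "i < b" "b \<le> k" using i1 bge bi0 ik by auto
    show "y i < y (i - 1)" if "2 \<le> i"
    proof -
      have "y (Suc (i - 1)) \<le> y (i - 1)" using that i0_n ii0 by (intro ystep) auto
      then have "y i \<le> y (i - 1)" using that by simp
      moreover have "y (i - 1) \<noteq> y i"
      proof
        assume "y (i - 1) = y i"
        then have "Pd (i - 1)" unfolding Pd_def using that ii0 by simp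
        moreover have "i - 1 < i" using that by simp
        ultimately show False using imin by blast
      qed
      ultimately show ?thesis by simp
    qed
    show "y (Suc b) < y b" if "b < n"
    proof (cases "Suc b < i0")
      case True
      have "Suc b \<notin> B"
      proof
        assume "Suc b \<in> B" then have "Suc b \<le> b" unfolding b_def using fB by (intro Max_ge)
        then show False by simp
      qed
      then have "y (Suc b) \<noteq> y i" using True bge unfolding B_def by auto
      moreover have "y (Suc b) \<le> y b" using that bge i1 by (intro ystep) auto
      ultimately show ?thesis using yb by simp
    next
      case False
      then have "Suc b = i0" using bi0 by simp
      then have "y (Suc b) = y n" using i0_y by simp
      moreover have "y n < y b" using bge i1 bi0 by (intro i0_less) auto
      ultimately show ?thesis by simp
    qed
    show "(\<Prod>i=1..l. y i) < real g * (\<Sum>i=Suc l..n. y i)" if "i \<le> l" "l < b" for l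
    proof (rule no_tight_eq)
      show "1 \<le> l" "Suc l < n" using that i1 bi0 i0_n by auto
      show "y l = y (Suc l)" using run[of l] run[of "Suc l"] that by simp
    qed
  qed
qed


lemma part_iii_last:
  assumes ik: "i0 \<le> k" and i02: "2 \<le> i0"
    and strict: "\<And>t. 1 \<le> t \<Longrightarrow> t < i0 \<Longrightarrow> y (Suc t) < y t"
    and slack: "(\<Prod>i=1..i0-1. y i) < real g * (\<Sum>i=i0..n. y i)"
  shows False
proof -
  define m where "m = Suc n - i0"
  have m1: "1 \<le> m" using i0_n unfolding m_def by simp
  have blockA: "\<forall>\<^sub>F e in at_right 0. (\<lambda>t. y t + e * u t) \<in> A_set g n \<and> (\<forall>t\<in>{1..n}. 0 < y t + e * u t)"
    if u0: "\<And>t. t < i0 - 1 \<Longrightarrow> u t = 0" and ublk: "\<And>t. i0 \<le> t \<Longrightarrow> t \<le> n \<Longrightarrow> u t = u n"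
      and usum: "(\<Sum>t=1..n. u t) = 0"
      and umono: "\<And>t. 1 \<le> t \<Longrightarrow> t < n \<Longrightarrow> u t < u (Suc t) \<Longrightarrow> t < i0" for u
  proof -
    have E1: "\<forall>\<^sub>F e in at_right 0. \<forall>t\<in>{1..<n}. y (Suc t) + e * u (Suc t) \<le> y t + e * u t"
    proof (rule ev_mono)
      show "\<And>t. 1 \<le> t \<Longrightarrow> t < n \<Longrightarrow> y (Suc t) \<le> y t" by (rule ystep)
      fix t assume t: "1 \<le> t" "t < n" and lt: "u t < u (Suc t)"
      then show "y (Suc t) < y t" using umono strict by blast
    qed
    have E2: "\<forall>\<^sub>F e in at_right 0. \<forall>t\<in>{1..n}. 0 < y t + e * u t"
      by (rule ev_pos) (auto intro: ypos)
    have sl: "(\<Prod>i=1..i0-1. y i) < real g * (\<Sum>i=Suc (i0-1)..n. y i)" using slack i02 by simp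
    have E3: "\<forall>\<^sub>F e in at_right 0. (\<Prod>i=1..i0-1. y i + e * u i) < real g * (\<Sum>i=Suc (i0-1)..n. y i + e * u i)"
      by (rule ev_slack[OF sl])
    show ?thesis using E1 E2 E3
    proof eventually_elim
      case (elim e)
      define x where "x = (\<lambda>t. y t + e * u t)"
      have xs: "(\<Sum>i=1..n. x i) = (\<Sum>i=1..n. y i)" unfolding x_def using usum by (simp add: sum_pert)
      have C: "(\<Prod>i=1..i0-1. x i) < real g * (\<Sum>i=i0..n. x i)" using elim(3) i02 unfolding x_def by simp
      have con: "(\<Prod>i=1..l. x i) \<le> real g * (\<Sum>i=Suc l..n. x i)" if l: "1 \<le> l" "l < n" for l
      proof -
        consider "l < i0 - 1" | "l = i0 - 1" | "i0 \<le> l" by linarith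
        then show ?thesis
        proof cases
          case 1
          have ln: "l \<le> n" using l by simp
          have P: "(\<Prod>i=1..l. x i) = (\<Prod>i=1..l. y i)" unfolding x_def using 1 u0
            by (intro prod.cong) auto
          have S: "(\<Sum>i=1..l. x i) = (\<Sum>i=1..l. y i)" unfolding x_def using 1 u0
            by (intro sum.cong) auto
          have "(\<Sum>i=Suc l..n. x i) = (\<Sum>i=Suc l..n. y i)"
            using tail_sum_split[OF ln, of x] tail_sum_split[OF ln, of y] xs S by simp
          then show ?thesis using P ycon l by simp
        next
          case 2
          then show ?thesis using C i02 by simp
        next
          case 3
          show ?thesis
          proof (rule tailx)
            show "\<forall>t\<in>{1..<n}. x (Suc t) \<le> x t" using elim(1) unfolding x_def by auto
            show "\<forall>t\<in>{1..n}. 0 < x t" using elim(2) unfolding x_def by auto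
            show "(\<Sum>i=1..n. x i) = (\<Sum>i=1..n. y i)" by (rule xs)
            show "x t = x n" if "i0 \<le> t" "t \<le> n" for t
              using that i0_block[of t] i0_n ublk[of t] unfolding x_def by simp
            show "2 \<le> i0" by (rule i02)
            show "(\<Prod>i=1..i0-1. x i) \<le> real g * (\<Sum>i=i0..n. x i)" using C by simp
            show "i0 \<le> l" "l < n" using 3 l by auto
          qed
        qed
      qed
      have "x \<in> A_set g n"
      proof (rule inA)
        show "\<forall>t\<in>{1..<n}. x (Suc t) \<le> x t" using elim(1) unfolding x_def by auto
        show "\<forall>t\<in>{1..n}. 0 < x t" using elim(2) unfolding x_def by auto
        show "(\<Sum>i=1..n. x i) = (\<Sum>i=1..n. y i)" by (rule xs)
      qed (rule con)
      then show ?case using elim(2) unfolding x_def by simp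
    qed
  qed
  define v :: "nat \<Rightarrow> real" where
    "v t = (if t = i0 - 1 then 1 else if i0 \<le> t then - 1 / real m else 0)" for t
  have vblk: "v t = - 1 / real m" if "i0 \<le> t" for t
  proof -
    have "t \<noteq> i0 - 1" using that i02 by simp
    then show ?thesis unfolding v_def using that by simp
  qed
  have vsum: "(\<Sum>t=1..n. v t) = 0"
  proof -
    have eq: "{1..n} = {1..i0-1} \<union> {i0..n}" using i0_n i02 by auto
    have dj: "{1..i0-1} \<inter> {i0..n} = {}" by auto
    have "(\<Sum>i=1..n. v i) = (\<Sum>i\<in>{1..i0-1} \<union> {i0..n}. v i)" by (simp only: eq)
    also have "\<dots> = (\<Sum>i\<in>{1..i0-1}. v i) + (\<Sum>i\<in>{i0..n}. v i)"
      by (rule sum.union_disjoint) (use dj in auto)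
    also have "(\<Sum>i\<in>{1..i0-1}. v i) = (\<Sum>i\<in>{1..i0-1}. if i = i0 - 1 then 1 else 0)"
      unfolding v_def by (intro sum.cong) auto
    also have "\<dots> = 1" using i02 by (simp add: sum.delta)
    also have "(\<Sum>i\<in>{i0..n}. v i) = (\<Sum>i\<in>{i0..n}. - 1 / real m)"
      using vblk by (intro sum.cong) auto
    also have "\<dots> = real m * (- 1 / real m)" unfolding m_def by simp
    also have "\<dots> = -1" using m1 by simp
    finally show ?thesis by simp
  qed
  have nomono: "t < i0" if "1 \<le> t" "t < n" "w t \<noteq> w (Suc t)" "w = v \<or> w = (\<lambda>t. - v t)" for t w
  proof (rule ccontr)
    assume "\<not> t < i0"
    then have "v t = v (Suc t)" using vblk[of t] vblk[of "Suc t"] by simp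
    then show False using that by auto
  qed
  have Ev: "\<forall>\<^sub>F e in at_right 0. (\<lambda>t. y t + e * v t) \<in> A_set g n \<and> (\<forall>t\<in>{1..n}. 0 < y t + e * v t)"
  proof (rule blockA)
    show "v t = 0" if "t < i0 - 1" for t using that unfolding v_def by auto
    show "v t = v n" if "i0 \<le> t" "t \<le> n" for t using that vblk i0_n by simp
    show "(\<Sum>t=1..n. v t) = 0" by (rule vsum)
    show "t < i0" if "1 \<le> t" "t < n" "v t < v (Suc t)" for t
      using nomono[of t v] that by auto
  qed
  have Ew: "\<forall>\<^sub>F e in at_right 0. (\<lambda>t. y t + e * (- v t)) \<in> A_set g n \<and> (\<forall>t\<in>{1..n}. 0 < y t + e * (- v t))"
  proof (rule blockA)
    show "- v t = 0" if "t < i0 - 1" for t using that unfolding v_def by auto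
    show "- v t = - v n" if "i0 \<le> t" "t \<le> n" for t using that vblk i0_n by simp
    show "(\<Sum>t=1..n. - v t) = 0" using vsum by (simp add: sum_negf)
    show "t < i0" if "1 \<le> t" "t < n" "- v t < - v (Suc t)" for t
      using nomono[of t "\<lambda>t. - v t"] that by auto
  qed
  have E0: "\<forall>\<^sub>F e in at_right (0::real). 0 < e" by (rule eventually_at_right_less)
  have fy: "0 < f_fun k y" unfolding f_fun_def using kn by (intro prod_pos ypos) auto
  have "\<forall>\<^sub>F e in at_right (0::real). False"
    using E0 Ev Ew
  proof eventually_elim
    case (elim e)
    define xp where "xp = (\<lambda>t. y t + e * v t)"
    define xm where "xm = (\<lambda>t. y t + e * (- v t))"
    have A1: "xp \<in> A_set g n" and A2: "xm \<in> A_set g n" using elim unfolding xp_def xm_def by auto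
    have pp: "0 < xp t" "0 < xm t" if "1 \<le> t" "t \<le> n" for t
      using elim that unfolding xp_def xm_def by auto
    have "f_fun k y * f_fun k y \<le> f_fun k xp * f_fun k xm"
      using ymin[OF A1] ymin[OF A2] fy by (intro mult_mono) auto
    moreover have "f_fun k xp * f_fun k xm < f_fun k y * f_fun k y"
    proof -
      have "f_fun k xp * f_fun k xm = (\<Prod>t=1..k. xp t * xm t)"
        unfolding f_fun_def by (simp add: prod.distrib)
      also have "\<dots> < (\<Prod>t=1..k. y t * y t)"
      proof (rule prod_strict[where a = "i0 - 1"])
        show "finite {1..k}" "i0 - 1 \<in> {1..k}" using i02 ik by auto
        show "0 \<le> xp t * xm t" if "t \<in> {1..k}" for t
          using pp[of t] that kn by (auto intro: mult_nonneg_nonneg less_imp_le)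
        show "xp t * xm t \<le> y t * y t" if "t \<in> {1..k}" for t
        proof -
          have "xp t * xm t = y t * y t - (e * v t) * (e * v t)"
            unfolding xp_def xm_def by (simp add: algebra_simps)
          then show ?thesis by simp
        qed
        show "xp (i0 - 1) * xm (i0 - 1) < y (i0 - 1) * y (i0 - 1)"
        proof -
          have "xp (i0 - 1) * xm (i0 - 1) = y (i0 - 1) * y (i0 - 1) - e * e"
            unfolding xp_def xm_def v_def by (simp add: algebra_simps)
          then show ?thesis using elim(1) by simp
        qed
        show "0 < y t * y t" if "t \<in> {1..k}" for t using that kn ypos[of t] by auto
      qed
      also have "\<dots> = f_fun k y * f_fun k y" unfolding f_fun_def by (simp add: prod.distrib)
      finally show ?thesis .
    qed
    ultimately show False by simp
  qed
  then show False using trivial_limit_at_right_real by (simp add: eventually_False)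
qed

end

theorem lemma3p9:
  fixes g n k i0 :: nat and y :: "nat \<Rightarrow> real"
  assumes "g \<ge> 1" and "n \<ge> 3" and "k \<in> {1..n}"
    and "y \<in> A_set g n"
    and "\<forall>x\<in>A_set g n. f_fun k y \<le> f_fun k x"
    and "i0 = (LEAST i. 1 \<le> i \<and> y i = y n)"
  shows "i0 \<le> k
    \<and> (\<forall>i\<in>{1..<i0}. y i > y (Suc i))
    \<and> (\<forall>i\<in>{1..<i0}. (\<Prod>j=1..i. y j) = real g * (\<Sum>j=Suc i..n. y j))"
proof -
  interpret mn g n k i0 y
    using assms by unfold_locales auto
  have I: "i0 \<le> k"
  proof (rule ccontr)
    assume "\<not> i0 \<le> k" then show False using part_i by simp
  qed
  have II: "y (Suc t) < y t" if t: "1 \<le> t" "t < i0" for t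
  proof (rule ccontr)
    assume nl: "\<not> y (Suc t) < y t"
    have tn: "t < n" using t i0_n by simp
    then have eq: "y t = y (Suc t)" using ystep[of t] t nl by simp
    show False
    proof (cases "Suc t < i0")
      case True
      then show False using part_ii[OF I] t eq by blast
    next
      case False
      then have "Suc t = i0" using t by simp
      then have "y t = y n" using eq i0_y by simp
      then show False using i0_less[of t] t by simp
    qed
  qed
  have III: "(\<Prod>j=1..i. y j) = real g * (\<Sum>j=Suc i..n. y j)" if i: "1 \<le> i" "i < i0" for i
  proof (rule ccontr)
    assume ne: "(\<Prod>j=1..i. y j) \<noteq> real g * (\<Sum>j=Suc i..n. y j)"
    have "(\<Prod>j=1..i. y j) \<le> real g * (\<Sum>j=Suc i..n. y j)" using ycon i i0_n by simp
    with ne have sl: "(\<Prod>j=1..i. y j) < real g * (\<Sum>j=Suc i..n. y j)" by simp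
    show False
    proof (cases "Suc i < i0")
      case True
      show False
      proof (rule pair_move[of i "Suc i"])
        show "1 \<le> i" "i < Suc i" "Suc i \<le> k" using i True I by auto
        show "y i < y (i - 1)" if "2 \<le> i"
          using II[of "i - 1"] that i by simp
        show "y (Suc (Suc i)) < y (Suc i)" if "Suc i < n" using II[of "Suc i"] True by simp
        show "(\<Prod>j=1..l. y j) < real g * (\<Sum>j=Suc l..n. y j)" if "i \<le> l" "l < Suc i" for l
          using sl that by (simp add: le_antisym less_Suc_eq_le)
      qed
    next
      case False
      then have ii: "i = i0 - 1" "2 \<le> i0" using i by auto
      show False
      proof (rule part_iii_last[OF I ii(2)])
        show "\<And>t. 1 \<le> t \<Longrightarrow> t < i0 \<Longrightarrow> y (Suc t) < y t" by (rule II)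
        show "(\<Prod>i=1..i0-1. y i) < real g * (\<Sum>i=i0..n. y i)" using sl ii by simp
      qed
    qed
  qed
  show ?thesis using I II III by auto
qed



end
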